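(* Let $G$ be a blockgraph that is valid and proper. Then in the total balance of $G$, every account has non-negative balance.
   Context: Accounts and transactions. There is a set $\mathbb{B}$ of bank public keys and a set $\mathbb{C}$ of user public keys; an account number is a pair $(b,c)\in\mathbb{B}\times\mathbb{C}$ (held by user $c$ at bank $b$). A transaction is a tuple $(s,t,m,i,d)$: $s$ is the source account and $t$ the destination account, $m>0$ is the amount, $i\in\mathbb{N}$ is a sequence number, and $d$ is a signature on $(s,t,m,i)$ made with $s$'s private key. The transaction belongs to the user of $s$. Two transactions are conflicting if they have the same source account and the same sequence number but are different. Blockgraph. A blockgraph is a finite directed acyclic graph with the following nodes. - There is exactly one init node, listing sorted account numbers with positive initial amounts (the initial balance; unlisted accounts start at $0$). - Every other node is owned by a bank and carries: the bank id, a sequence number, the hash of its parent (the previous node in the bank's chain, or the init node for sequence number $1$), and the bank's signature. - Each such node is of one of four types: start node (a list of transactions), update node (references to nodes of other banks), close node, or accept node. Edges go from each non-init node to its parent, and from each update node to the nodes it references. Along each bank's chain, the start, close and accept nodes occur in the repeating pattern start, close, accept, start, close, accept, $\dots$; update nodes may occur anywhere. The nodes from a start node to the next accept node of that bank form a block, whose close node and accept node match the start node. Terminology on a blockgraph: - $v_1$ acknowledges $v_2$ if $v_2$ is reachable from $v_1$. - The subgraph of $v$ is the set of nodes reachable from $v$, minus $v$ itself. - A bank is malicious according to a blockgraph if the blockgraph contains two different nodes of that bank with the same sequence number. - A start node is open if it has no matching accept node in the graph. Total balance. Start from the initial balance. Then, for every accept node, apply each transaction of its matching start node, provided that the subgraph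 of the matching close node contains no conflicting transaction and that the same transaction was not already applied. The applied transactions are called accepted. Uncertain transactions in $G$. These are the transactions $t$ that satisfy all of the following: - $t$ lies in an open start node of a bank $A$; - $t$ transfers from an account at bank $B$ to an account at bank $C$, with $A\neq B$ and $B\neq C$; - no other transaction of the same user with the same sequence number is applied in the total balance of $G$. Voting power distribution of $G$. Each bank initially gets the sum of the balances of its accounts in the total balance of $G$. Then, for each user having uncertain transactions in $G$, take the largest amount among that user's uncertain transactions. This amount is subtracted from the voting power of the user's bank and is assigned as shared voting power to the coalition consisting of the user's bank together with the banks of all destination accounts of that user's uncertain transactions. Validity. A node is valid if it has a (unique) representing blockgraph, its subgraph is valid (all nodes valid), and the type-specific condition below holds. A blockgraph is valid if all its nodes are valid. - Init node: always valid. - Update node: it references no node already in its parent's subgraph, and its own bank is not malicious according to its subgraph. - Start node $v$ (with subgraph $G'$): for each transaction $t$ in $v$, with user $u$ and amount $m$, let $N$ be the number of distinct accepted transactions of $u$ in $G'$. Then those $N$ transactions must have sequence numbers exactly $1,\dots,N$; $t$ must have sequence number $N+1$; no transaction of $u$ different from $t$ with sequence number $N+1$ may appear in $G'$; and $u$'s balance in the total balance of $G'$ must be at least $m$. - Close node $v_c$ following start node $v_s$: let $S$ be the set of banks $B'$ owning a node $w$ such that $v_c$ acknowledges $w$ and $w$ acknowledges $v_s$. The voting power of the banks in $S$, including voting power shared only among members of $S$, computed in the voting power distribution of $v_c$'s subgraph, must be at least a fixed threshold of at least two thirds of the total voting power. - Accept node $v_a$ following close node $v_c$: the same condition, with $S$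 the set of banks owning a node $w$ such that $v_a$ acknowledges $w$ and $w$ acknowledges $v_c$, and voting power computed in $v_a$'s subgraph. Proper. A blockgraph is proper if (1) for every pair of close nodes, at least one of them acknowledges the start node of the other's block, and (2) for every pair of accept nodes, at least one of them acknowledges the close node of the other's block. *)

theory Defs
  imports Complex_Main "HOL-Library.Product_Lexorder"
begin

text \<open>Banks have type 'b, users type 'c, signatures (of users and of banks) are
  abstract values of type 's.  An account is a pair (bank, user).\<close>

type_synonym ('b,'c) acct = "'b \<times> 'c"

datatype ('b,'c,'s) tx =
  Tx (src: "('b,'c) acct") (dst: "('b,'c) acct") (amt: real) (seqno: nat) (tsig: 's)

text \<open>Nodes.  Hashes are modelled by the referenced nodes themselves (collision-free
  hashing), so a node structurally contains its parent and references.\<close>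

datatype ('b,'c,'s) node =
    Init (init_list: "(('b,'c) acct \<times> real) list")
  | Nd (owner: 'b) (nseq: nat) (parent: "('b,'c,'s) node") (kind: "('b,'c,'s) kind") (nsig: 's)
and ('b,'c,'s) kind =
    Start "('b,'c,'s) tx list"
  | Update "('b,'c,'s) node list"
  | Close
  | Accept

definition is_init :: "('b,'c,'s) node \<Rightarrow> bool" where
  "is_init v = (case v of Init _ \<Rightarrow> True | _ \<Rightarrow> False)"

definition is_start :: "('b,'c,'s) node \<Rightarrow> bool" where
  "is_start v = (case v of Nd _ _ _ (Start _) _ \<Rightarrow> True | _ \<Rightarrow> False)"

definition is_update :: "('b,'c,'s) node \<Rightarrow> bool" where
  "is_update v = (case v of Nd _ _ _ (Update _) _ \<Rightarrow> True | _ \<Rightarrow> False)"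

definition is_close :: "('b,'c,'s) node \<Rightarrow> bool" where
  "is_close v = (case v of Nd _ _ _ Close _ \<Rightarrow> True | _ \<Rightarrow> False)"

definition is_accept :: "('b,'c,'s) node \<Rightarrow> bool" where
  "is_accept v = (case v of Nd _ _ _ Accept _ \<Rightarrow> True | _ \<Rightarrow> False)"

definition node_txs :: "('b,'c,'s) node \<Rightarrow> ('b,'c,'s) tx set" where
  "node_txs v = (case v of Nd _ _ _ (Start ts) _ \<Rightarrow> set ts | _ \<Rightarrow> {})"

definition txs_in :: "('b,'c,'s) node set \<Rightarrow> ('b,'c,'s) tx set" where
  "txs_in S = (\<Union>v\<in>S. node_txs v)"

definition node_refs :: "('b,'c,'s) node \<Rightarrow> ('b,'c,'s) node set" where
  "node_refs v = (case v of Nd _ _ _ (Update rs) _ \<Rightarrow> set rs | _ \<Rightarrow> {})"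

definition conflicting :: "('b,'c,'s) tx \<Rightarrow> ('b,'c,'s) tx \<Rightarrow> bool" where
  "conflicting t t' \<longleftrightarrow> src t = src t' \<and> seqno t = seqno t' \<and> t \<noteq> t'"

definition children :: "('b,'c,'s) node \<Rightarrow> ('b,'c,'s) node set" where
  "children v = (case v of Init _ \<Rightarrow> {} | Nd _ _ p _ _ \<Rightarrow> insert p (node_refs v))"

definition edges :: "(('b,'c,'s) node \<times> ('b,'c,'s) node) set" where
  "edges = {(v, w). w \<in> children v}"

definition acks :: "('b,'c,'s) node \<Rightarrow> ('b,'c,'s) node \<Rightarrow> bool" where
  "acks v w \<longleftrightarrow> (v, w) \<in> edges\<^sup>*"

definition subgraph :: "('b,'c,'s) node \<Rightarrow> ('b,'c,'s) node set" where
  "subgraph v = {w. (v, w) \<in> edges\<^sup>*} - {v}"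

definition rep :: "('b,'c,'s) node \<Rightarrow> ('b,'c,'s) node set" where
  "rep v = {w. (v, w) \<in> edges\<^sup>*}"

fun last_main :: "('b,'c,'s) node \<Rightarrow> ('b,'c,'s) node option" where
  "last_main (Init l) = None"
| "last_main (Nd b n p k s) =
     (case k of Update _ \<Rightarrow> last_main p | _ \<Rightarrow> Some (Nd b n p k s))"

definition start_of_close :: "('b,'c,'s) node \<Rightarrow> ('b,'c,'s) node" where
  "start_of_close c = the (last_main (parent c))"

definition close_of :: "('b,'c,'s) node \<Rightarrow> ('b,'c,'s) node" where
  "close_of a = the (last_main (parent a))"

definition start_of :: "('b,'c,'s) node \<Rightarrow> ('b,'c,'s) node" where
  "start_of a = start_of_close (close_of a)"

definition node_wf :: "('b::linorder,'c::linorder,'s) node \<Rightarrow> bool" where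
  "node_wf v = (case v of
      Init l \<Rightarrow> sorted_wrt (<) (map fst l) \<and> (\<forall>x\<in>set l. snd x > 0)
    | Nd b n p k s \<Rightarrow>
        ((n = 1 \<and> is_init p) \<or> (n \<ge> 2 \<and> \<not> is_init p \<and> owner p = b \<and> nseq p = n - 1))
      \<and> (case k of
            Update rs \<Rightarrow> (\<forall>r\<in>set rs. \<not> is_init r \<and> owner r \<noteq> b)
          | Start ts \<Rightarrow> (last_main p = None \<or> (\<exists>w. last_main p = Some w \<and> is_accept w))
                        \<and> (\<forall>t\<in>set ts. amt t > 0)
          | Close \<Rightarrow> (\<exists>w. last_main p = Some w \<and> is_start w)
          | Accept \<Rightarrow> (\<exists>w. last_main p = Some w \<and> is_close w)))"

definition is_blockgraph :: "('b::linorder,'c::linorder,'s) node set \<Rightarrow> bool" where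
  "is_blockgraph G \<longleftrightarrow> finite G
     \<and> (\<forall>v\<in>G. children v \<subseteq> G)
     \<and> (\<exists>!v. v \<in> G \<and> is_init v)
     \<and> (\<forall>v\<in>G. node_wf v)"

definition malicious :: "('b,'c,'s) node set \<Rightarrow> 'b \<Rightarrow> bool" where
  "malicious G b \<longleftrightarrow> (\<exists>v\<in>G. \<exists>w\<in>G. v \<noteq> w \<and> \<not> is_init v \<and> \<not> is_init w
       \<and> owner v = b \<and> owner w = b \<and> nseq v = nseq w)"

definition open_start :: "('b,'c,'s) node set \<Rightarrow> ('b,'c,'s) node \<Rightarrow> bool" where
  "open_start G v \<longleftrightarrow> is_start v \<and> \<not> (\<exists>a\<in>G. is_accept a \<and> start_of a = v)"

definition init_node :: "('b,'c,'s) node set \<Rightarrow> ('b,'c,'s) node" where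
  "init_node G = (THE v. v \<in> G \<and> is_init v)"

definition init_bal :: "('b,'c,'s) node set \<Rightarrow> ('b,'c) acct \<Rightarrow> real" where
  "init_bal G a = (case map_of (init_list (init_node G)) a of Some m \<Rightarrow> m | None \<Rightarrow> 0)"

text \<open>Each transaction is applied at most once (set semantics).\<close>
definition accepted :: "('b,'c,'s) node set \<Rightarrow> ('b,'c,'s) tx set" where
  "accepted G = {t. \<exists>a\<in>G. is_accept a \<and> t \<in> node_txs (start_of a)
                       \<and> \<not> (\<exists>t'\<in>txs_in (subgraph (close_of a)). conflicting t t')}"

definition balance :: "('b,'c,'s) node set \<Rightarrow> ('b,'c) acct \<Rightarrow> real" where
  "balance G a = init_bal G a
      + (\<Sum>t\<in>{t\<in>accepted G. dst t = a}. amt t)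
      - (\<Sum>t\<in>{t\<in>accepted G. src t = a}. amt t)"

text \<open>Users are identified with their (source) account; the user's bank is the bank
  of that account.\<close>
definition uncertain :: "('b,'c,'s) node set \<Rightarrow> ('b,'c,'s) tx set" where
  "uncertain G = {t. \<exists>v\<in>G. open_start G v \<and> t \<in> node_txs v
        \<and> owner v \<noteq> fst (src t) \<and> fst (src t) \<noteq> fst (dst t)
        \<and> \<not> (\<exists>t'\<in>accepted G. t' \<noteq> t \<and> src t' = src t \<and> seqno t' = seqno t)}"

definition unc_users :: "('b,'c,'s) node set \<Rightarrow> ('b,'c) acct set" where
  "unc_users G = src ` uncertain G"

definition unc_max :: "('b,'c,'s) node set \<Rightarrow> ('b,'c) acct \<Rightarrow> real" where
  "unc_max G u = Max (amt ` {t\<in>uncertain G. src t = u})"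

definition coalition :: "('b,'c,'s) node set \<Rightarrow> ('b,'c) acct \<Rightarrow> 'b set" where
  "coalition G u = insert (fst u) ((\<lambda>t. fst (dst t)) ` {t\<in>uncertain G. src t = u})"

text \<open>Accounts possibly having nonzero balance.\<close>
definition accts :: "('b,'c,'s) node set \<Rightarrow> ('b,'c) acct set" where
  "accts G = fst ` set (init_list (init_node G)) \<union> src ` accepted G \<union> dst ` accepted G"

definition bank_power :: "('b,'c,'s) node set \<Rightarrow> 'b \<Rightarrow> real" where
  "bank_power G b = (\<Sum>a\<in>{a\<in>accts G. fst a = b}. balance G a)"

definition ind_power :: "('b,'c,'s) node set \<Rightarrow> 'b \<Rightarrow> real" where
  "ind_power G b = bank_power G b - (\<Sum>u\<in>{u\<in>unc_users G. fst u = b}. unc_max G u)"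

definition power_of :: "('b,'c,'s) node set \<Rightarrow> 'b set \<Rightarrow> real" where
  "power_of G S = (\<Sum>b\<in>S. ind_power G b)
      + (\<Sum>u\<in>{u\<in>unc_users G. coalition G u \<subseteq> S}. unc_max G u)"

definition total_power :: "('b,'c,'s) node set \<Rightarrow> real" where
  "total_power G = (\<Sum>a\<in>accts G. balance G a)"

definition banks_between :: "('b,'c,'s) node \<Rightarrow> ('b,'c,'s) node \<Rightarrow> 'b set" where
  "banks_between x y = {owner w | w. acks x w \<and> acks w y \<and> \<not> is_init w}"

definition local_ok :: "real \<Rightarrow> ('b::linorder,'c::linorder,'s) node \<Rightarrow> bool" where
  "local_ok \<theta> v = (case v of
      Init _ \<Rightarrow> True
    | Nd b n p k s \<Rightarrow> (case k of
        Update rs \<Rightarrow> set rs \<inter> subgraph p = {} \<and> \<not> malicious (subgraph v) b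
      | Start ts \<Rightarrow> (\<forall>t\<in>set ts.
           let G' = subgraph v; u = src t;
               A = {t'\<in>accepted G'. src t' = u}; N = card A
           in seqno ` A = {1..N} \<and> seqno t = N + 1
              \<and> (\<forall>t'\<in>txs_in G'. src t' = u \<and> seqno t' = N + 1 \<longrightarrow> t' = t)
              \<and> balance G' u \<ge> amt t)
      | Close \<Rightarrow> power_of (subgraph v) (banks_between v (start_of_close v))
                   \<ge> \<theta> * total_power (subgraph v)
      | Accept \<Rightarrow> power_of (subgraph v) (banks_between v (close_of v))
                   \<ge> \<theta> * total_power (subgraph v)))"

text \<open>A node is valid iff its representing blockgraph is a blockgraph and every node
  of it (itself and its subgraph) satisfies its type-specific condition (this is the
  unfolding of the recursive definition).\<close>
definition valid_node :: "real \<Rightarrow> ('b::linorder,'c::linorder,'s) node \<Rightarrow> bool" where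
  "valid_node \<theta> v \<longleftrightarrow> (\<forall>w\<in>rep v. is_blockgraph (rep w) \<and> local_ok \<theta> w)"

definition valid :: "real \<Rightarrow> ('b::linorder,'c::linorder,'s) node set \<Rightarrow> bool" where
  "valid \<theta> G \<longleftrightarrow> is_blockgraph G \<and> (\<forall>v\<in>G. valid_node \<theta> v)"

definition proper :: "('b,'c,'s) node set \<Rightarrow> bool" where
  "proper G \<longleftrightarrow>
     (\<forall>c1\<in>G. \<forall>c2\<in>G. is_close c1 \<and> is_close c2 \<longrightarrow>
         acks c1 (start_of_close c2) \<or> acks c2 (start_of_close c1))
   \<and> (\<forall>a1\<in>G. \<forall>a2\<in>G. is_accept a1 \<and> is_accept a2 \<longrightarrow>
         acks a1 (close_of a2) \<or> acks a2 (close_of a1))"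

end

theory Submission
  imports Defs
begin

lemma reach_in:
  assumes "\<forall>v\<in>G. children v \<subseteq> G" "(v,w) \<in> edges\<^sup>*" "v \<in> G"
  shows "w \<in> G"
  using assms(2,3) by induction (use assms(1) in \<open>auto simp: edges_def\<close>)

lemma last_main_reach: "last_main p = Some w \<Longrightarrow> (p,w) \<in> edges\<^sup>*"
proof (induction p rule: last_main.induct)
  case (1 l) then show ?case by simp
next
  case (2 b n p k s)
  show ?case
  proof (cases k)
    case (Update rs)
    then have "last_main p = Some w" using 2(2) by simp
    then have "(p,w) \<in> edges\<^sup>*" using 2(1) Update by simp
    moreover have "(Nd b n p k s, p) \<in> edges" by (simp add: edges_def children_def)
    ultimately show ?thesis by (meson converse_rtrancl_into_rtrancl)
  qed (use 2(2) in auto)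
qed

lemma accept_struct:
  assumes bg: "is_blockgraph G" and aG: "a \<in> G" and acc: "is_accept a"
  shows "close_of a \<in> G \<and> is_close (close_of a) \<and> start_of a \<in> G
         \<and> is_start (start_of a) \<and> acks (close_of a) (start_of a)"
proof -
  have cl: "\<forall>v\<in>G. children v \<subseteq> G" and wf: "\<forall>v\<in>G. node_wf v"
    using bg unfolding is_blockgraph_def by auto
  obtain b n p s where a: "a = Nd b n p Accept s"
    using acc unfolding is_accept_def by (auto split: node.splits kind.splits)
  have "node_wf a" using wf aG by blast
  then obtain w where w: "last_main p = Some w" "is_close w"
    unfolding node_wf_def a by auto
  have pG: "p \<in> G" using cl aG a by (auto simp: children_def)
  have wG: "w \<in> G" using reach_in[OF cl last_main_reach[OF w(1)] pG] .
  have cw: "close_of a = w" using a w by (simp add: close_of_def)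
  obtain b' n' p' s' where w': "w = Nd b' n' p' Close s'"
    using w(2) unfolding is_close_def by (auto split: node.splits kind.splits)
  have "node_wf w" using wf wG by blast
  then obtain x where x: "last_main p' = Some x" "is_start x"
    unfolding node_wf_def w' by auto
  have p'G: "p' \<in> G" using cl wG w' by (auto simp: children_def)
  have xG: "x \<in> G" using reach_in[OF cl last_main_reach[OF x(1)] p'G] .
  have sx: "start_of a = x" using cw w' x by (simp add: start_of_def start_of_close_def)
  have "(w, p') \<in> edges" using w' by (simp add: edges_def children_def)
  then have "(w, x) \<in> edges\<^sup>*" using last_main_reach[OF x(1)]
    by (meson converse_rtrancl_into_rtrancl)
  then show ?thesis using cw sx wG xG w(2) x(2) by (simp add: acks_def)
qed

lemma accepted_mono: "H \<subseteq> G \<Longrightarrow> accepted H \<subseteq> accepted G"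
  unfolding accepted_def by blast

lemma accepted_finite:
  assumes "finite G" shows "finite (accepted G)"
proof -
  have "accepted G \<subseteq> (\<Union>a\<in>G. node_txs (start_of a))"
    unfolding accepted_def by blast
  moreover have "finite (node_txs v)" for v :: "('a,'b,'c) node"
    unfolding node_txs_def by (auto split: node.splits kind.splits)
  ultimately show ?thesis using assms by (meson finite_UN_I finite_subset)
qed


lemma accepted_start:
  assumes bg: "is_blockgraph G" and t: "t \<in> accepted G"
  shows "\<exists>s\<in>G. is_start s \<and> t \<in> node_txs s"
  using t accept_struct[OF bg] unfolding accepted_def by blast

lemma start_amt_pos:
  assumes bg: "is_blockgraph G" and sG: "s \<in> G" and st: "is_start s" and t: "t \<in> node_txs s"
  shows "amt t > 0"
proof -
  obtain b n p ts sg where s: "s = Nd b n p (Start ts) sg"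
    using st unfolding is_start_def by (auto split: node.splits kind.splits)
  have "node_wf s" using bg sG unfolding is_blockgraph_def by blast
  then show ?thesis using t unfolding node_wf_def s node_txs_def by auto
qed

lemma start_ok:
  assumes v: "valid \<theta> G" and sG: "s \<in> G" and st: "is_start s" and t: "t \<in> node_txs s"
  shows "seqno ` {t'\<in>accepted (subgraph s). src t' = src t}
            = {1..card {t'\<in>accepted (subgraph s). src t' = src t}}
         \<and> seqno t = card {t'\<in>accepted (subgraph s). src t' = src t} + 1
         \<and> balance (subgraph s) (src t) \<ge> amt t"
proof -
  obtain b n p ts sg where s: "s = Nd b n p (Start ts) sg"
    using st unfolding is_start_def by (auto split: node.splits kind.splits)
  have "s \<in> rep s" unfolding rep_def by simp
  then have "local_ok \<theta> s" using v sG unfolding valid_def valid_node_def by blast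
  then show ?thesis using t unfolding local_ok_def s node_txs_def Let_def by auto
qed

lemma subgraph_sub:
  assumes bg: "is_blockgraph G" and sG: "s \<in> G"
  shows "subgraph s \<subseteq> G"
  using reach_in[of G s] bg sG unfolding is_blockgraph_def subgraph_def by blast

lemma init_node_eq:
  assumes bg: "is_blockgraph G" and sub: "H \<subseteq> G" and i: "i \<in> H" "is_init i"
  shows "init_node H = init_node G"
proof -
  have u: "\<exists>!v. v \<in> G \<and> is_init v" using bg unfolding is_blockgraph_def by blast
  have "\<And>v. v \<in> G \<and> is_init v \<Longrightarrow> v = i" using u i sub by blast
  then have g: "init_node G = i" unfolding init_node_def using i sub by (metis (mono_tags, lifting) subsetD the_equality)
  have "\<And>v. v \<in> H \<and> is_init v \<Longrightarrow> v = i" using u i sub by blast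
  then have "init_node H = i" unfolding init_node_def using i by (metis (mono_tags, lifting) the_equality)
  then show ?thesis using g by simp
qed

lemma init_bal_nonneg:
  assumes bg: "is_blockgraph G"
  shows "init_bal G a \<ge> 0"
proof -
  obtain i where i: "i \<in> G" "is_init i" using bg unfolding is_blockgraph_def by blast
  have u: "\<exists>!v. v \<in> G \<and> is_init v" using bg unfolding is_blockgraph_def by blast
  have ig: "init_node G = i" unfolding init_node_def using u i by (metis (mono_tags, lifting) the_equality)
  obtain l where l: "i = Init l" using i(2) unfolding is_init_def by (auto split: node.splits)
  have "node_wf i" using bg i unfolding is_blockgraph_def by blast
  then have pos: "\<forall>x\<in>set l. snd x > 0" unfolding node_wf_def l by simp
  show ?thesis
  proof (cases "map_of l a")
    case None then show ?thesis unfolding init_bal_def ig l by simp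
  next
    case (Some m)
    then have "(a, m) \<in> set l" by (rule map_of_SomeD)
    then show ?thesis using pos Some unfolding init_bal_def ig l by force
  qed
qed


lemma no_double:
  assumes bg: "is_blockgraph G" and pr: "proper G"
    and t1: "t1 \<in> accepted G" and t2: "t2 \<in> accepted G"
    and eq: "src t1 = src t2" "seqno t1 = seqno t2"
  shows "t1 = t2"
proof (rule ccontr)
  assume ne: "t1 \<noteq> t2"
  obtain a1 where a1: "a1 \<in> G" "is_accept a1" "t1 \<in> node_txs (start_of a1)"
    "\<not> (\<exists>t'\<in>txs_in (subgraph (close_of a1)). conflicting t1 t')"
    using t1 unfolding accepted_def by blast
  obtain a2 where a2: "a2 \<in> G" "is_accept a2" "t2 \<in> node_txs (start_of a2)"
    "\<not> (\<exists>t'\<in>txs_in (subgraph (close_of a2)). conflicting t2 t')"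
    using t2 unfolding accepted_def by blast
  note s1 = accept_struct[OF bg a1(1,2)] and s2 = accept_struct[OF bg a2(1,2)]
  have c12: "conflicting t1 t2" "conflicting t2 t1" using eq ne unfolding conflicting_def by auto
  have "acks (close_of a1) (start_of_close (close_of a2)) \<or> acks (close_of a2) (start_of_close (close_of a1))"
    using pr s1 s2 unfolding proper_def by blast
  then have "acks (close_of a1) (start_of a2) \<or> acks (close_of a2) (start_of a1)"
    unfolding start_of_def .
  then show False
  proof
    assume h: "acks (close_of a1) (start_of a2)"
    have "start_of a2 \<noteq> close_of a1" using s1 s2
      unfolding is_start_def is_close_def by (auto split: node.splits kind.splits)
    then have "start_of a2 \<in> subgraph (close_of a1)" using h unfolding acks_def subgraph_def by blast
    then have "t2 \<in> txs_in (subgraph (close_of a1))" using a2(3) unfolding txs_in_def by blast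
    then show False using a1(4) c12 by blast
  next
    assume h: "acks (close_of a2) (start_of a1)"
    have "start_of a1 \<noteq> close_of a2" using s1 s2
      unfolding is_start_def is_close_def by (auto split: node.splits kind.splits)
    then have "start_of a1 \<in> subgraph (close_of a2)" using h unfolding acks_def subgraph_def by blast
    then have "t1 \<in> txs_in (subgraph (close_of a2))" using a1(3) unfolding txs_in_def by blast
    then show False using a2(4) c12 by blast
  qed
qed


theorem mainTheorem2:
  fixes \<theta> :: real and G :: "('b::linorder, 'c::linorder, 's) node set"
  assumes "\<theta> \<ge> 2/3"
    and "valid \<theta> G"
    and "proper G"
  shows "\<forall>a. balance G a \<ge> 0"
proof
  fix u
  have v: "valid \<theta> G" by fact
  have bg: "is_blockgraph G" using v unfolding valid_def by blast
  have fin: "finite (accepted G)" using accepted_finite bg unfolding is_blockgraph_def by blast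
  define Out where "Out = {t\<in>accepted G. src t = u}"
  define I where "I = {t\<in>accepted G. dst t = u}"
  have finOut: "finite Out" and finI: "finite I" using fin unfolding Out_def I_def by auto
  have amtpos: "amt t > 0" if "t \<in> accepted G" for t
    using accepted_start[OF bg that] start_amt_pos[OF bg] by blast
  have seqpos: "seqno t \<ge> 1" if "t \<in> accepted G" for t
    using accepted_start[OF bg that] start_ok[OF v] by fastforce
  have Ige: "sum amt I \<ge> 0" using amtpos unfolding I_def by (intro sum_nonneg) (simp add: less_imp_le)
  have bal: "balance G u = init_bal G u + sum amt I - sum amt Out"
    unfolding balance_def Out_def I_def by simp
  have ib: "init_bal G u \<ge> 0" by (rule init_bal_nonneg[OF bg])
  show "balance G u \<ge> 0"
  proof (cases "Out = {}")
    case True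
    then show ?thesis using bal Ige ib by simp
  next
    case False
    define M where "M = Max (seqno ` Out)"
    have "M \<in> seqno ` Out" unfolding M_def using finOut False by simp
    then obtain tm where tm: "tm \<in> Out" "seqno tm = M" by blast
    have tmax: "seqno t \<le> M" if "t \<in> Out" for t unfolding M_def using finOut that by simp
    have tmacc: "tm \<in> accepted G" and tmu: "src tm = u" using tm unfolding Out_def by auto
    obtain s where sG: "s \<in> G" and st: "is_start s" and tms: "tm \<in> node_txs s"
      using accepted_start[OF bg tmacc] by blast
    define G' where "G' = subgraph s"
    define A where "A = {t'\<in>accepted G'. src t' = u}"
    define N where "N = card A"
    have ok: "seqno ` A = {1..N}" "seqno tm = N + 1" "balance G' u \<ge> amt tm"
      using start_ok[OF v sG st tms] unfolding A_def N_def G'_def tmu by auto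
    have G'G: "G' \<subseteq> G" unfolding G'_def using subgraph_sub[OF bg sG] .
    have accsub: "accepted G' \<subseteq> accepted G" using accepted_mono[OF G'G] .
    have AO: "A = Out - {tm}"
    proof
      show "A \<subseteq> Out - {tm}"
      proof
        fix t assume t: "t \<in> A"
        then have "seqno t \<in> {1..N}" using ok(1) by blast
        then have "t \<noteq> tm" using ok(2) by auto
        then show "t \<in> Out - {tm}" using t accsub unfolding A_def Out_def by auto
      qed
    next
      show "Out - {tm} \<subseteq> A"
      proof
        fix t assume t: "t \<in> Out - {tm}"
        have tacc: "t \<in> accepted G" and tu: "src t = u" using t unfolding Out_def by auto
        have "seqno t \<noteq> N + 1"
          using no_double[OF bg assms(3) tacc tmacc] tu tmu ok(2) t by auto
        moreover have "seqno t \<le> N + 1" using tmax t tm(2) ok(2) by auto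
        moreover have "seqno t \<ge> 1" using seqpos tacc by blast
        ultimately have "seqno t \<in> seqno ` A" using ok(1) by auto
        then obtain t'' where t'': "t'' \<in> A" "seqno t'' = seqno t" by (metis imageE)
        have "t'' \<in> accepted G" "src t'' = u" using t'' accsub unfolding A_def by auto
        then have "t'' = t" using no_double[OF bg assms(3) _ tacc] t''(2) tu by auto
        then show "t \<in> A" using t'' by simp
      qed
    qed
    have sumO: "sum amt Out = sum amt A + amt tm"
      using AO finOut tm(1) by (simp add: sum.remove)
    define I' where "I' = {t\<in>accepted G'. dst t = u}"
    have I'I: "I' \<subseteq> I" using accsub unfolding I'_def I_def by auto
    have sumI: "sum amt I' \<le> sum amt I"
      by (rule sum_mono2[OF finI I'I]) (use amtpos in \<open>auto simp: I_def less_imp_le\<close>)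
    have "s \<in> rep s" unfolding rep_def by simp
    then have bgs: "is_blockgraph (rep s)" using v sG unfolding valid_def valid_node_def by blast
    then obtain i where i: "i \<in> rep s" "is_init i" unfolding is_blockgraph_def by blast
    have "i \<noteq> s" using i(2) st unfolding is_init_def is_start_def by (auto split: node.splits)
    then have iG': "i \<in> G'" using i(1) unfolding G'_def rep_def subgraph_def by blast
    have "init_node G' = init_node G" using init_node_eq[OF bg G'G iG' i(2)] .
    then have ibeq: "init_bal G' u = init_bal G u" unfolding init_bal_def by simp
    have "balance G' u = init_bal G' u + sum amt I' - sum amt A"
      unfolding balance_def I'_def A_def by simp
    then show ?thesis using bal ok(3) sumO sumI ibeq by linarith
  qed
qed

end
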